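(* Let $d\ge2$, $1\le r_p\le n_p$, let $f$ be a real-valued function differentiable on an open neighbourhood of $\Omega=\mathrm{St}(r_1,n_1,\mathbb{C})\times\cdots\times\mathrm{St}(r_d,n_d,\mathbb{C})$, and let $\tilde f=f\circ\rho$, where $\rho$ keeps the first $r_p$ columns of the $p$-th component. Let $\upsilon\in\Upsilon=\mathcal{U}_{n_1}\times\cdots\times\mathcal{U}_{n_d}$ and $\omega=\rho(\upsilon)\in\Omega$. Then $\operatorname{grad}\tilde f(\upsilon)=0$ if and only if $\operatorname{grad}f(\omega)=0$.
   Context: $\mathrm{St}(r,n,\mathbb{C})=\{X\in\mathbb{C}^{n\times r}:X^HX=I_r\}$, $\mathcal{U}_n=\mathrm{St}(n,n,\mathbb{C})$. Matrix spaces carry the real inner product $\mathrm{Re}\,\mathrm{tr}(X^HY)$, Euclidean gradient $\nabla F=\partial F/\partial X^{\Re}+\mathrm{i}\,\partial F/\partial X^{\Im}$, $\mathrm{skew}(P)=\frac12(P-P^H)$. For $g$ on a Stiefel manifold, $\operatorname{grad}g(X)=(I_n-XX^H)\nabla g(X)+X\,\mathrm{skew}(X^H\nabla g(X))$. For $\omega=(X^{(1)},\dots,X^{(d)})$, $\operatorname{grad}f(\omega)=(\operatorname{grad}g_{(1)}(X^{(1)}),\dots,\operatorname{grad}g_{(d)}(X^{(d)}))$, where $g_{(p)}$ is $f$ as a function of the $p$-th component with the others fixed; $\operatorname{grad}\tilde f(\upsilon)$ is defined in the same way blockwise on $\Upsilon$. *)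

theory Defs
  imports "HOL-Analysis.Analysis" "Jordan_Normal_Form.Matrix"
begin

definition ctrans :: "complex mat \<Rightarrow> complex mat" where
  "ctrans A = mat (dim_col A) (dim_row A) (\<lambda>(i,j). cnj (A $$ (j,i)))"

definition skew :: "complex mat \<Rightarrow> complex mat" where
  "skew P = (1/2 :: complex) \<cdot>\<^sub>m (P - ctrans P)"

definition prodspace :: "nat \<Rightarrow> (nat \<Rightarrow> nat) \<Rightarrow> (nat \<Rightarrow> nat) \<Rightarrow> complex mat list set" where
  "prodspace d m c = {ws. length ws = d \<and> (\<forall>p<d. ws ! p \<in> carrier_mat (m p) (c p))}"

definition stiefel_prod :: "nat \<Rightarrow> (nat \<Rightarrow> nat) \<Rightarrow> (nat \<Rightarrow> nat) \<Rightarrow> complex mat list set" where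
  "stiefel_prod d m c = {ws. ws \<in> prodspace d m c \<and>
      (\<forall>p<d. ctrans (ws ! p) * (ws ! p) = 1\<^sub>m (c p))}"

definition ladd :: "complex mat list \<Rightarrow> complex mat list \<Rightarrow> complex mat list" where
  "ladd xs ys = map2 (+) xs ys"

definition lsmult :: "complex \<Rightarrow> complex mat list \<Rightarrow> complex mat list" where
  "lsmult a xs = map (\<lambda>X. a \<cdot>\<^sub>m X) xs"

(* Frobenius norm w.r.t. the real inner product Re tr(X^H Y) *)
definition lnorm :: "nat \<Rightarrow> (nat \<Rightarrow> nat) \<Rightarrow> (nat \<Rightarrow> nat) \<Rightarrow> complex mat list \<Rightarrow> real" where
  "lnorm d m c xs = sqrt (\<Sum>p<d. \<Sum>i<m p. \<Sum>j<c p. (cmod (xs ! p $$ (i,j)))\<^sup>2)"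

definition lopen :: "nat \<Rightarrow> (nat \<Rightarrow> nat) \<Rightarrow> (nat \<Rightarrow> nat) \<Rightarrow> complex mat list set \<Rightarrow> bool" where
  "lopen d m c U \<longleftrightarrow> U \<subseteq> prodspace d m c \<and>
     (\<forall>x\<in>U. \<exists>e>0. \<forall>y\<in>prodspace d m c. lnorm d m c (ladd y (lsmult (-1) x)) < e \<longrightarrow> y \<in> U)"

definition ldifferentiable_at ::
  "nat \<Rightarrow> (nat \<Rightarrow> nat) \<Rightarrow> (nat \<Rightarrow> nat) \<Rightarrow> (complex mat list \<Rightarrow> real) \<Rightarrow> complex mat list \<Rightarrow> bool" where
  "ldifferentiable_at d m c F x \<longleftrightarrow>
     (\<exists>L :: complex mat list \<Rightarrow> real.
        (\<forall>y\<in>prodspace d m c. \<forall>z\<in>prodspace d m c. L (ladd y z) = L y + L z) \<and>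
        (\<forall>a::real. \<forall>y\<in>prodspace d m c. L (lsmult (complex_of_real a) y) = a * L y) \<and>
        (\<forall>e>0. \<exists>\<delta>>0. \<forall>h\<in>prodspace d m c. lnorm d m c h < \<delta> \<longrightarrow>
            \<bar>F (ladd x h) - F x - L h\<bar> \<le> e * lnorm d m c h))"

definition diff_on_open_nbhd ::
  "nat \<Rightarrow> (nat \<Rightarrow> nat) \<Rightarrow> (nat \<Rightarrow> nat) \<Rightarrow> (complex mat list \<Rightarrow> real) \<Rightarrow> complex mat list set \<Rightarrow> bool" where
  "diff_on_open_nbhd d m c F S \<longleftrightarrow>
     (\<exists>U. lopen d m c U \<and> S \<subseteq> U \<and> (\<forall>x\<in>U. ldifferentiable_at d m c F x))"

definition ldir :: "nat \<Rightarrow> (nat \<Rightarrow> nat) \<Rightarrow> (nat \<Rightarrow> nat) \<Rightarrow> nat \<Rightarrow> nat \<Rightarrow> nat \<Rightarrow> complex \<Rightarrow> complex mat list" where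
  "ldir d m c p i j z = map (\<lambda>q. if q = p
       then mat (m q) (c q) (\<lambda>(a,b). if a = i \<and> b = j then z else 0)
       else 0\<^sub>m (m q) (c q)) [0..<d]"

(* Euclidean gradient of F with respect to the p-th component:
   dF/dX^Re + i dF/dX^Im, entrywise via real partial derivatives *)
definition egrad ::
  "nat \<Rightarrow> (nat \<Rightarrow> nat) \<Rightarrow> (nat \<Rightarrow> nat) \<Rightarrow> (complex mat list \<Rightarrow> real) \<Rightarrow> complex mat list \<Rightarrow> nat \<Rightarrow> complex mat" where
  "egrad d m c F ws p = mat (m p) (c p) (\<lambda>(i,j).
      complex_of_real (deriv (\<lambda>t::real. F (ladd ws (ldir d m c p i j (complex_of_real t)))) 0)
      + \<i> * complex_of_real (deriv (\<lambda>t::real. F (ladd ws (ldir d m c p i j (\<i> * complex_of_real t)))) 0))"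

definition rgrad ::
  "nat \<Rightarrow> (nat \<Rightarrow> nat) \<Rightarrow> (nat \<Rightarrow> nat) \<Rightarrow> (complex mat list \<Rightarrow> real) \<Rightarrow> complex mat list \<Rightarrow> nat \<Rightarrow> complex mat" where
  "rgrad d m c F ws p =
     (let X = ws ! p; G = egrad d m c F ws p in
        (1\<^sub>m (m p) - X * ctrans X) * G + X * skew (ctrans X * G))"

definition rho :: "nat \<Rightarrow> (nat \<Rightarrow> nat) \<Rightarrow> (nat \<Rightarrow> nat) \<Rightarrow> complex mat list \<Rightarrow> complex mat list" where
  "rho d n r us = map (\<lambda>p. mat (n p) (r p) (\<lambda>(i,j). us ! p $$ (i,j))) [0..<d]"

end

theory Submission
  imports Defs "Jordan_Normal_Form.Determinant"
begin

lemma ctrans_carrier[simp]: "A \<in> carrier_mat a b \<Longrightarrow> ctrans A \<in> carrier_mat b a"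
  by (auto simp: ctrans_def)
lemma ctrans_dims[simp]: "dim_row (ctrans A) = dim_col A" "dim_col (ctrans A) = dim_row A"
  by (auto simp: ctrans_def)
lemma ctrans_index[simp]: "i < dim_col A \<Longrightarrow> j < dim_row A \<Longrightarrow> ctrans A $$ (i,j) = cnj (A $$ (j,i))"
  by (auto simp: ctrans_def)
lemma skew_carrier[simp]: "A \<in> carrier_mat a a \<Longrightarrow> skew A \<in> carrier_mat a a"
  by (auto simp: skew_def)
lemma skew_dims[simp]: "dim_row (skew A) = dim_col A" "dim_col (skew A) = dim_row A"
  by (auto simp: skew_def)
lemma skew_index: "A \<in> carrier_mat a a \<Longrightarrow> i < a \<Longrightarrow> j < a \<Longrightarrow>
   skew A $$ (i,j) = 1/2 * (A $$ (i,j) - cnj (A $$ (j,i)))"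
  by (auto simp: skew_def)

lemma key:
  fixes X G Gt Y :: "complex mat"
  assumes X: "X \<in> carrier_mat N N" and XX: "ctrans X * X = 1\<^sub>m N"
    and G: "G \<in> carrier_mat N R" and RN: "R \<le> N"
    and Gt: "Gt \<in> carrier_mat N N" and Gte: "\<forall>i<N. \<forall>j<N. Gt $$ (i,j) = (if j < R then G $$ (i,j) else 0)"
    and Y: "Y \<in> carrier_mat N R" and Ye: "\<forall>i<N. \<forall>j<R. Y $$ (i,j) = X $$ (i,j)"
  shows "((1\<^sub>m N - X * ctrans X) * Gt + X * skew (ctrans X * Gt) = 0\<^sub>m N N)
     \<longleftrightarrow> ((1\<^sub>m N - Y * ctrans Y) * G + Y * skew (ctrans Y * G) = 0\<^sub>m N R)"
proof -
  have XH: "ctrans X \<in> carrier_mat N N" using X by simp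
  have XX': "X * ctrans X = 1\<^sub>m N" using mat_mult_left_right_inverse[OF XH X XX] .
  have cancel: "(B = 0\<^sub>m N c) \<longleftrightarrow> (ctrans X * B = 0\<^sub>m N c)" if B: "B \<in> carrier_mat N c" for B c
  proof
    assume "ctrans X * B = 0\<^sub>m N c"
    then have "X * (ctrans X * B) = 0\<^sub>m N c" using X by simp
    moreover have "X * (ctrans X * B) = B"
      using assoc_mult_mat[OF X XH B, symmetric] XX' B by simp
    ultimately show "B = 0\<^sub>m N c" by simp
  qed (use X in simp)
  define M where "M = ctrans X * G"
  have M: "M \<in> carrier_mat N R" using G XH by (simp add: M_def)
  define S where "S = ctrans X * Gt"
  have S: "S \<in> carrier_mat N N" using Gt XH by (simp add: S_def)
  have Se: "S $$ (i,j) = (if j < R then M $$ (i,j) else 0)" if "i < N" "j < N" for i j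
  proof -
    have "S $$ (i,j) = (\<Sum>k<N. cnj (X $$ (k,i)) * Gt $$ (k,j))"
      using that X Gt by (simp add: S_def scalar_prod_def atLeast0LessThan)
    also have "\<dots> = (if j < R then (\<Sum>k<N. cnj (X $$ (k,i)) * G $$ (k,j)) else 0)"
      using Gte that by (auto intro: sum.cong)
    also have "\<dots> = (if j < R then M $$ (i,j) else 0)"
      using that X G by (simp add: M_def scalar_prod_def atLeast0LessThan)
    finally show ?thesis .
  qed
  have L: "ctrans X * ((1\<^sub>m N - X * ctrans X) * Gt + X * skew S) = skew S"
  proof -
    have "1\<^sub>m N - X * ctrans X = (0\<^sub>m N N :: complex mat)" unfolding XX' by (intro eq_matI) auto
    then have "(1\<^sub>m N - X * ctrans X) * Gt = 0\<^sub>m N N" using Gt by simp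
    then have "(1\<^sub>m N - X * ctrans X) * Gt + X * skew S = X * skew S"
      using X S by simp
    moreover have "ctrans X * (X * skew S) = skew S"
      using assoc_mult_mat[OF XH X skew_carrier[OF S], symmetric] XX S skew_carrier[OF S] by (simp add: carrier_matD)
    ultimately show ?thesis by simp
  qed
  define D where "D = ctrans X * Y"
  define A where "A = ctrans Y * G"
  have D: "D \<in> carrier_mat N R" using XH Y by (simp add: D_def)
  have A: "A \<in> carrier_mat R R" unfolding A_def using ctrans_carrier[OF Y] G by (rule mult_carrier_mat)
  have De: "D $$ (i,j) = (if i = j then 1 else 0)" if "i < N" "j < R" for i j
  proof -
    have "D $$ (i,j) = (\<Sum>k<N. cnj (X $$ (k,i)) * Y $$ (k,j))"
      using that X Y by (simp add: D_def scalar_prod_def atLeast0LessThan)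
    also have "\<dots> = (\<Sum>k<N. cnj (X $$ (k,i)) * X $$ (k,j))"
      using Ye that by (auto intro: sum.cong)
    also have "\<dots> = (ctrans X * X) $$ (i,j)"
      using that X RN by (simp add: scalar_prod_def atLeast0LessThan)
    finally show ?thesis using XX that RN by simp
  qed
  have Ae: "A $$ (i,j) = M $$ (i,j)" if "i < R" "j < R" for i j
  proof -
    have "A $$ (i,j) = (\<Sum>k<N. cnj (Y $$ (k,i)) * G $$ (k,j))"
      using that Y G by (simp add: A_def scalar_prod_def atLeast0LessThan)
    also have "\<dots> = (\<Sum>k<N. cnj (X $$ (k,i)) * G $$ (k,j))"
      using Ye that by (auto intro: sum.cong)
    also have "\<dots> = M $$ (i,j)"
      using that X G RN by (simp add: M_def scalar_prod_def atLeast0LessThan)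
    finally show ?thesis .
  qed
  have DK: "(D * K) $$ (i,j) = (if i < R then K $$ (i,j) else 0)"
    if K: "K \<in> carrier_mat R R" and "i < N" "j < R" for K i j
  proof -
    have "(D * K) $$ (i,j) = (\<Sum>k<R. D $$ (i,k) * K $$ (k,j))"
      using that D by (simp add: scalar_prod_def atLeast0LessThan)
    also have "\<dots> = (\<Sum>k<R. (if i = k then K $$ (k,j) else 0))"
      by (rule sum.cong) (use De that in auto)
    also have "\<dots> = (if i < R then K $$ (i,j) else 0)" by simp
    finally show ?thesis .
  qed
  have Rr: "ctrans X * ((1\<^sub>m N - Y * ctrans Y) * G + Y * skew A) = M - D * A + D * skew A"
  proof -
    have YH: "ctrans Y \<in> carrier_mat R N" using Y by simp
    have "(1\<^sub>m N - Y * ctrans Y) * G = G - Y * A"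
      using minus_mult_distrib_mat[of "1\<^sub>m N" N N "Y * ctrans Y" G R] Y YH G
      by (simp add: A_def)
    then have "ctrans X * ((1\<^sub>m N - Y * ctrans Y) * G + Y * skew A)
       = ctrans X * (G - Y * A) + ctrans X * (Y * skew A)"
      using mult_add_distrib_mat[OF XH, of "G - Y*A" R "Y * skew A"] G Y A
        minus_carrier_mat[OF mult_carrier_mat[OF Y A], of G] mult_carrier_mat[OF Y skew_carrier[OF A]]
      by simp
    also have "\<dots> = M - D * A + D * skew A"
      using mult_minus_distrib_mat[OF XH G, of "Y * A"] Y A XH
        assoc_mult_mat[OF XH Y A] assoc_mult_mat[OF XH Y skew_carrier[OF A]]
      by (simp add: M_def D_def)
    finally show ?thesis .
  qed
  have lhs: "(skew S = 0\<^sub>m N N) \<longleftrightarrow> (\<forall>i<N. \<forall>j<N. S $$ (i,j) = cnj (S $$ (j,i)))"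
    using S skew_carrier[OF S] by (auto simp: skew_index mat_eq_iff carrier_matD)
  have rhs: "(M - D * A + D * skew A = 0\<^sub>m N R) \<longleftrightarrow>
     (\<forall>i<N. \<forall>j<R. (M - D * A + D * skew A) $$ (i,j) = 0)"
    using M D A by (auto simp: mat_eq_iff carrier_matD)
  have rhse: "(M - D * A + D * skew A) $$ (i,j) =
     (if i < R then 1/2 * (M $$ (i,j) - cnj (M $$ (j,i))) else M $$ (i,j))" if "i < N" "j < R" for i j
    using that M D A DK[OF A] DK[OF skew_carrier[OF A]] Ae skew_index[OF A]
    by (auto simp: field_simps)
  have cL: "(1\<^sub>m N - X * ctrans X) * Gt + X * skew S \<in> carrier_mat N N"
    by (rule add_carrier_mat[OF mult_carrier_mat[OF X skew_carrier[OF S]]])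
  have YH: "ctrans Y \<in> carrier_mat R N" using Y by simp
  have cR: "(1\<^sub>m N - Y * ctrans Y) * G + Y * skew A \<in> carrier_mat N R"
    by (rule add_carrier_mat[OF mult_carrier_mat[OF Y skew_carrier[OF A]]])
  have e1: "((1\<^sub>m N - X * ctrans X) * Gt + X * skew (ctrans X * Gt) = 0\<^sub>m N N) \<longleftrightarrow> skew S = 0\<^sub>m N N"
    using cancel[OF cL] L by (simp add: S_def)
  have e2: "((1\<^sub>m N - Y * ctrans Y) * G + Y * skew (ctrans Y * G) = 0\<^sub>m N R) \<longleftrightarrow>
      (M - D * A + D * skew A = 0\<^sub>m N R)"
    using cancel[OF cR] Rr by (simp add: A_def)
  have e3: "(\<forall>i<N. \<forall>j<N. S $$ (i,j) = cnj (S $$ (j,i))) \<longleftrightarrow>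
     (\<forall>i<N. \<forall>j<R. (if i < R then 1/2 * (M $$ (i,j) - cnj (M $$ (j,i))) else M $$ (i,j)) = 0)"
  proof
    assume H: "\<forall>i<N. \<forall>j<N. S $$ (i,j) = cnj (S $$ (j,i))"
    show "\<forall>i<N. \<forall>j<R. (if i < R then 1/2 * (M $$ (i,j) - cnj (M $$ (j,i))) else M $$ (i,j)) = 0"
    proof (intro allI impI)
      fix i j assume ij: "i < N" "j < R"
      have jN: "j < N" using ij RN by simp
      have h: "S $$ (i,j) = cnj (S $$ (j,i))" using H ij jN by blast
      have h': "(if j < R then M $$ (i,j) else 0) = cnj (if i < R then M $$ (j,i) else 0)"
        using h unfolding Se[OF ij(1) jN] Se[OF jN ij(1)] .
      show "(if i < R then 1/2 * (M $$ (i,j) - cnj (M $$ (j,i))) else M $$ (i,j)) = 0"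
      proof (cases "i < R")
        case True
        then have "M $$ (i,j) = cnj (M $$ (j,i))" using h' ij by simp
        then show ?thesis using True by simp
      next
        case False
        then have "M $$ (i,j) = 0" using h' ij by simp
        then show ?thesis using False by simp
      qed
    qed
  next
    assume H: "\<forall>i<N. \<forall>j<R. (if i < R then 1/2 * (M $$ (i,j) - cnj (M $$ (j,i))) else M $$ (i,j)) = 0"
    show "\<forall>i<N. \<forall>j<N. S $$ (i,j) = cnj (S $$ (j,i))"
    proof (intro allI impI)
      fix i j assume ij: "i < N" "j < N"
      show "S $$ (i,j) = cnj (S $$ (j,i))"
        unfolding Se[OF ij] Se[OF ij(2,1)]
      proof (cases "j < R")
        case jR: True
        have Hij: "(if i < R then 1/2 * (M $$ (i,j) - cnj (M $$ (j,i))) else M $$ (i,j)) = 0"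
          using H ij jR by blast
        show "(if j < R then M $$ (i,j) else 0) = cnj (if i < R then M $$ (j,i) else 0)"
        proof (cases "i < R")
          case True
          then have "M $$ (i,j) - cnj (M $$ (j,i)) = 0" using Hij by simp
          then show ?thesis using True jR by simp
        next
          case False
          then show ?thesis using Hij jR by simp
        qed
      next
        case jR: False
        show "(if j < R then M $$ (i,j) else 0) = cnj (if i < R then M $$ (j,i) else 0)"
        proof (cases "i < R")
          case True
          have Hji: "(if j < R then 1/2 * (M $$ (j,i) - cnj (M $$ (i,j))) else M $$ (j,i)) = 0"
            using H ij True by blast
          then show ?thesis using True jR by simp
        next
          case False
          then show ?thesis using jR by simp
        qed
      qed
    qed
  qed
  show ?thesis
    unfolding e1 e2 lhs rhs using e3 rhse by (simp add: S_def)
qed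

lemma rho_ladd:
  assumes U: "us \<in> prodspace d n n" and rn: "\<forall>q<d. r q \<le> n q" and p: "p < d"
  shows "rho d n r (ladd us (ldir d n n p i j z)) =
    (if j < r p then ladd (rho d n r us) (ldir d n r p i j z) else rho d n r us)"
proof -
  have len: "length us = d" and cu: "\<And>q. q < d \<Longrightarrow> us ! q \<in> carrier_mat (n q) (n q)"
    using U by (auto simp: prodspace_def)
  have cd: "\<And>q. q < d \<Longrightarrow> dim_row (us ! q) = n q" "\<And>q. q < d \<Longrightarrow> dim_col (us ! q) = n q"
    using cu by auto
  show ?thesis
  proof (cases "j < r p")
    case True
    show ?thesis using True
      by (intro nth_equalityI) (use p rn in \<open>auto simp: rho_def ladd_def ldir_def len cd intro!: eq_matI\<close>)
  next
    case False
    have E: "mat (n q) (r q) (\<lambda>(a,b). ladd us (ldir d n n p i j z) ! q $$ (a,b)) =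
        mat (n q) (r q) (\<lambda>(a,b). us ! q $$ (a,b))" if q: "q < d" for q
      using q False rn cu[OF q]
      by (cases "q = p") (auto simp: ladd_def ldir_def len intro!: eq_matI)
    have "rho d n r (ladd us (ldir d n n p i j z)) = rho d n r us"
      unfolding rho_def by (rule map_cong) (use E in auto)
    then show ?thesis using False by simp
  qed
qed

theorem corollary2p8:
  fixes d :: nat and n r :: "nat \<Rightarrow> nat"
    and f :: "complex mat list \<Rightarrow> real"
    and \<upsilon> \<omega> :: "complex mat list"
  assumes "d \<ge> 2"
    and "\<forall>p<d. 1 \<le> r p \<and> r p \<le> n p"
    and "diff_on_open_nbhd d n r f (stiefel_prod d n r)"
    and "\<upsilon> \<in> stiefel_prod d n n"
    and "\<omega> = rho d n r \<upsilon>"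
  shows "(\<forall>p<d. rgrad d n n (f \<circ> rho d n r) \<upsilon> p = 0\<^sub>m (n p) (n p))
     \<longleftrightarrow> (\<forall>p<d. rgrad d n r f \<omega> p = 0\<^sub>m (n p) (r p))"
proof -
  have rn: "\<forall>q<d. r q \<le> n q" using assms(2) by simp
  have U: "\<upsilon> \<in> prodspace d n n" using assms(4) by (simp add: stiefel_prod_def)
  have each: "rgrad d n n (f \<circ> rho d n r) \<upsilon> p = 0\<^sub>m (n p) (n p)
      \<longleftrightarrow> rgrad d n r f \<omega> p = 0\<^sub>m (n p) (r p)" if p: "p < d" for p
  proof -
    define X where "X = \<upsilon> ! p"
    define Y where "Y = \<omega> ! p"
    define G where "G = egrad d n r f \<omega> p"
    define Gt where "Gt = egrad d n n (f \<circ> rho d n r) \<upsilon> p"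
    have X: "X \<in> carrier_mat (n p) (n p)" using U p by (simp add: prodspace_def X_def)
    have XX: "ctrans X * X = 1\<^sub>m (n p)" using assms(4) p by (simp add: stiefel_prod_def X_def)
    have G: "G \<in> carrier_mat (n p) (r p)" by (simp add: G_def egrad_def)
    have Gt: "Gt \<in> carrier_mat (n p) (n p)" by (simp add: Gt_def egrad_def)
    have Y: "Y \<in> carrier_mat (n p) (r p)" using p by (simp add: Y_def assms(5) rho_def)
    have Ye: "\<forall>i<n p. \<forall>j<r p. Y $$ (i,j) = X $$ (i,j)"
      using p by (simp add: Y_def X_def assms(5) rho_def)
    have Gte: "\<forall>i<n p. \<forall>j<n p. Gt $$ (i,j) = (if j < r p then G $$ (i,j) else 0)"
    proof (intro allI impI)
      fix i j assume ij: "i < n p" "j < n p"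
      have e: "\<And>z. f (rho d n r (ladd \<upsilon> (ldir d n n p i j z))) =
          (if j < r p then f (ladd \<omega> (ldir d n r p i j z)) else f \<omega>)"
        using rho_ladd[OF U rn p] assms(5) by simp
      show "Gt $$ (i,j) = (if j < r p then G $$ (i,j) else 0)"
        using ij by (simp add: Gt_def G_def egrad_def e)
    qed
    show ?thesis
      unfolding rgrad_def Let_def X_def[symmetric] Y_def[symmetric] G_def[symmetric] Gt_def[symmetric]
      by (rule key[OF X XX G _ Gt Gte Y Ye]) (use rn p in simp)
  qed
  show ?thesis using each by blast
qed

end
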